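(* Let $T$ be a quasi-binary tree with vertex weight function $\omega:V(T)\to\mathbb{R}$. Let $k\ge 2$ be an integer and let $\gamma\in\mathbb{R}$ with $\gamma\ge \omega_3$. If $$\omega(T)\ge \max\left\{\frac{2k-1}{2}\,\omega_1-\frac{1}{2}\,\gamma,\ (2k-1)\,\omega_2-k\gamma\right\},$$ then $$\beta_k(T)\ge \frac{\omega(T)-(k-1)\gamma}{2k-1}.$$
   Context: A binary tree is a tree in which every vertex has degree $3$, except for pending vertices (degree $1$) and one root vertex (degree $2$). A tree is quasi-binary if it is a connected subgraph of a binary tree; in particular every vertex has degree $1$, $2$ or $3$. Given a weight function $\omega:V(T)\to\mathbb{R}$, for a subgraph $H$ write $\omega(H)=\sum_{v\in V(H)}\omega(v)$. For $i=1,2,3$ let $V_i$ be the set of vertices of degree $i$, and let $\omega_i=\max\{\omega(v): v\in V_j \text{ for some } j \text{ with } i\le j\le 3\}$ (the maximum weight of a vertex of degree at least $i$). For an integer $1\le k\le |V(T)|-1$, a $k$-separator of $T$ is a set $F\subseteq E(T)$ with $|F|=k-1$; its deletion yields $k$ connected components $C^1_F(T),\dots,C^k_F(T)$. Define $$\beta_k(T)=\max_{F\subseteq E(T),\,|F|=k-1}\ \min_{1\le i\le k}\omega(C^i_F(T)).$$ *)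

theory Defs
  imports Complex_Main
begin

definition graph :: "'a set \<Rightarrow> 'a set set \<Rightarrow> bool" where
  "graph V E \<longleftrightarrow> finite V \<and> (\<forall>e\<in>E. e \<subseteq> V \<and> card e = 2)"

definition adj :: "'a set set \<Rightarrow> ('a \<times> 'a) set" where
  "adj E = {(u, v). {u, v} \<in> E}"

definition reachable :: "'a set set \<Rightarrow> 'a \<Rightarrow> 'a \<Rightarrow> bool" where
  "reachable E u v \<longleftrightarrow> (u, v) \<in> (adj E)\<^sup>*"

definition connected_graph :: "'a set \<Rightarrow> 'a set set \<Rightarrow> bool" where
  "connected_graph V E \<longleftrightarrow> V \<noteq> {} \<and> (\<forall>u\<in>V. \<forall>v\<in>V. reachable E u v)"

text \<open>Acyclic: no edge lies on a cycle, i.e. deleting any edge disconnects its endpoints.\<close>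
definition acyclic_graph :: "'a set set \<Rightarrow> bool" where
  "acyclic_graph E \<longleftrightarrow> (\<forall>u v. {u, v} \<in> E \<longrightarrow> \<not> reachable (E - {{u, v}}) u v)"

definition is_tree :: "'a set \<Rightarrow> 'a set set \<Rightarrow> bool" where
  "is_tree V E \<longleftrightarrow> graph V E \<and> connected_graph V E \<and> acyclic_graph E"

definition degree :: "'a set set \<Rightarrow> 'a \<Rightarrow> nat" where
  "degree E v = card {e\<in>E. v \<in> e}"

text \<open>Binary tree: every vertex has degree 3, except leaves (degree 1) and exactly one root (degree 2).\<close>
definition binary_tree :: "'a set \<Rightarrow> 'a set set \<Rightarrow> bool" where
  "binary_tree V E \<longleftrightarrow> is_tree V E \<and>
     (\<exists>!r. r \<in> V \<and> degree E r = 2) \<and>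
     (\<forall>v\<in>V. degree E v \<in> {1, 2, 3})"

text \<open>Quasi-binary: a connected subgraph of some binary tree (the host tree lives on a larger
  vertex type so that there is always room for extra vertices).\<close>
definition quasi_binary :: "'a set \<Rightarrow> 'a set set \<Rightarrow> bool" where
  "quasi_binary V E \<longleftrightarrow> graph V E \<and> connected_graph V E \<and>
     (\<exists>(V' :: ('a + nat) set) E'. binary_tree V' E' \<and> Inl ` V \<subseteq> V' \<and> (\<lambda>e. Inl ` e) ` E \<subseteq> E')"

definition wt :: "('a \<Rightarrow> real) \<Rightarrow> 'a set \<Rightarrow> real" where
  "wt \<omega> H = (\<Sum>v\<in>H. \<omega> v)"

definition omega_deg :: "'a set \<Rightarrow> 'a set set \<Rightarrow> ('a \<Rightarrow> real) \<Rightarrow> nat \<Rightarrow> real" where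
  "omega_deg V E \<omega> i = Max {\<omega> v | v. v \<in> V \<and> i \<le> degree E v}"

definition components :: "'a set \<Rightarrow> 'a set set \<Rightarrow> 'a set set" where
  "components V E' = {{u\<in>V. reachable E' v u} | v. v \<in> V}"

definition beta :: "'a set \<Rightarrow> 'a set set \<Rightarrow> ('a \<Rightarrow> real) \<Rightarrow> nat \<Rightarrow> real" where
  "beta V E \<omega> k = Max {Min (wt \<omega> ` components V (E - F)) | F. F \<subseteq> E \<and> card F = k - 1}"

end

theory Submission
  imports Defs
begin


lemma adj_sym: "(u,v) \<in> adj E \<Longrightarrow> (v,u) \<in> adj E"
  by (auto simp: adj_def insert_commute)

lemma reachable_refl[simp]: "reachable E u u"
  by (simp add: reachable_def)

lemma reachable_trans: "reachable E u v \<Longrightarrow> reachable E v w \<Longrightarrow> reachable E u w"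
  by (auto simp: reachable_def)

lemma reachable_sym: "reachable E u v \<Longrightarrow> reachable E v u"
  unfolding reachable_def
proof (induction rule: rtrancl_induct)
  case base then show ?case by simp
next
  case (step y z)
  then show ?case by (meson adj_sym converse_rtrancl_into_rtrancl)
qed

lemma adj_mono: "E \<subseteq> E' \<Longrightarrow> adj E \<subseteq> adj E'"
  by (auto simp: adj_def)

lemma reachable_mono: "E \<subseteq> E' \<Longrightarrow> reachable E u v \<Longrightarrow> reachable E' u v"
  unfolding reachable_def using rtrancl_mono[OF adj_mono] by blast

lemma reachable_edge: "{u,v} \<in> E \<Longrightarrow> reachable E u v"
  by (auto simp: reachable_def adj_def)

lemma reachable_isolated: "(\<forall>e\<in>E. l \<notin> e) \<Longrightarrow> reachable E l x \<Longrightarrow> x = l"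
  unfolding reachable_def
  by (erule converse_rtranclE) (auto simp: adj_def)

lemma reachable_empty: "reachable {} u x \<Longrightarrow> x = u"
  using reachable_isolated[of "{}" u x] by simp

lemma reachable_has_edge: "reachable E v w \<Longrightarrow> v \<noteq> w \<Longrightarrow> \<exists>e\<in>E. v \<in> e"
  unfolding reachable_def
proof (erule converse_rtranclE)
  fix y assume "(v, y) \<in> adj E"
  then have "{v,y} \<in> E" by (simp add: adj_def)
  then show "\<exists>e\<in>E. v \<in> e" by blast
qed simp

lemma degree_pos: "finite E \<Longrightarrow> reachable E v w \<Longrightarrow> v \<noteq> w \<Longrightarrow> 1 \<le> degree E v"
proof -
  assume a: "finite E" "reachable E v w" "v \<noteq> w"
  obtain e where e: "e \<in> E" "v \<in> e" using reachable_has_edge[OF a(2,3)] by blast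
  have "card {x\<in>E. v\<in>x} > 0"
    by (rule card_gt_0_iff[THEN iffD2]) (use a e in auto)
  then show ?thesis unfolding degree_def by linarith
qed

lemma degree_mono: "finite E \<Longrightarrow> E0 \<subseteq> E \<Longrightarrow> degree E0 v \<le> degree E v"
  unfolding degree_def by (rule card_mono) auto

lemma degree_insert_other:
  "v \<notin> e \<Longrightarrow> degree (insert e E) v = degree E v"
  unfolding degree_def by (rule arg_cong[where f=card]) auto

lemma degree_insert_in:
  "finite E \<Longrightarrow> e \<notin> E \<Longrightarrow> v \<in> e \<Longrightarrow> degree (insert e E) v = degree E v + 1"
proof -
  assume a: "finite E" "e \<notin> E" "v \<in> e"
  have "{x\<in>insert e E. v \<in> x} = insert e {x\<in>E. v\<in>x}" using a by auto
  then show ?thesis unfolding degree_def using a by simp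
qed



inductive itree :: "'a set \<Rightarrow> 'a set set \<Rightarrow> bool" where
  single: "itree {v} {}"
| add: "itree V E \<Longrightarrow> l \<notin> V \<Longrightarrow> u \<in> V \<Longrightarrow> itree (insert l V) (insert {l,u} E)"

lemma itree_graph:
  "itree V E \<Longrightarrow> finite V \<and> V \<noteq> {} \<and> (\<forall>e\<in>E. e \<subseteq> V \<and> card e = 2) \<and> finite E"
proof (induction rule: itree.induct)
  case (single v) then show ?case by simp
next
  case (add V E l u)
  have "l \<noteq> u" using add by blast
  then have "card {l,u} = 2" by simp
  then show ?case using add by auto
qed

lemma itree_card: "itree V E \<Longrightarrow> card E + 1 = card V"
proof (induction rule: itree.induct)
  case (single v) then show ?case by simp
next
  case (add V E l u)
  have g: "finite V" "\<forall>e\<in>E. e \<subseteq> V" "finite E" using itree_graph[OF add(1)] by auto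
  have "{l,u} \<notin> E" using g(2) add(2) by blast
  then have "card (insert {l,u} E) = card E + 1" using g(3) by simp
  moreover have "card (insert l V) = card V + 1" using g(1) add(2) by simp
  ultimately show ?case using add(4) by simp
qed

lemma itree_conn: "itree V E \<Longrightarrow> v \<in> V \<Longrightarrow> w \<in> V \<Longrightarrow> reachable E v w"
proof (induction arbitrary: v w rule: itree.induct)
  case (single x) then show ?case by simp
next
  case (add V E l u)
  have sub: "E \<subseteq> insert {l,u} E" by blast
  have lu: "reachable (insert {l,u} E) l u" by (rule reachable_edge) simp
  have ul: "reachable (insert {l,u} E) u l" by (rule reachable_sym[OF lu])
  have inV: "\<And>x y. x \<in> V \<Longrightarrow> y \<in> V \<Longrightarrow> reachable (insert {l,u} E) x y"
    using add(4) reachable_mono[OF sub] by blast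
  show ?case
  proof (cases "v = l")
    case True
    show ?thesis
    proof (cases "w = l")
      case True then show ?thesis using \<open>v = l\<close> by simp
    next
      case False
      then have "w \<in> V" using add(6) by simp
      then show ?thesis using \<open>v = l\<close> reachable_trans[OF lu inV[OF add(3)]] by simp
    qed
  next
    case False
    then have v: "v \<in> V" using add(5) by simp
    show ?thesis
    proof (cases "w = l")
      case True then show ?thesis using reachable_trans[OF inV[OF v add(3)] ul] by simp
    next
      case False
      then have "w \<in> V" using add(6) by simp
      then show ?thesis using inV[OF v] by simp
    qed
  qed
qed

lemma itree_components: "itree V E \<Longrightarrow> C \<in> components V E \<Longrightarrow> C = V"
proof -
  assume a: "itree V E" "C \<in> components V E"
  then obtain v where v: "v \<in> V" "C = {x\<in>V. reachable E v x}" unfolding components_def by blast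
  have "\<forall>x\<in>V. reachable E v x" using itree_conn[OF a(1) v(1)] by blast
  then show "C = V" using v(2) by blast
qed

lemma itree_deg_pos: "itree V E \<Longrightarrow> 2 \<le> card V \<Longrightarrow> v \<in> V \<Longrightarrow> 1 \<le> degree E v"
proof -
  assume a: "itree V E" "2 \<le> card V" "v \<in> V"
  have "\<exists>w\<in>V. w \<noteq> v"
  proof (rule ccontr)
    assume "\<not> (\<exists>w\<in>V. w \<noteq> v)"
    then have "V = {v}" using a(3) by blast
    then show False using a(2) by simp
  qed
  then obtain w where w: "w \<in> V" "w \<noteq> v" by blast
  have "finite E" using itree_graph[OF a(1)] by simp
  then show ?thesis using degree_pos[OF _ itree_conn[OF a(1) a(3) w(1)]] w(2) by simp
qed

lemma itree_glue:
  "itree B EB \<Longrightarrow> itree A EA \<Longrightarrow> A \<inter> B = {} \<Longrightarrow> a \<in> A \<Longrightarrow> b \<in> B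
   \<Longrightarrow> itree (A \<union> B) (insert {a,b} (EA \<union> EB))"
proof (induction arbitrary: A EA a b rule: itree.induct)
  case (single v)
  then have bv: "b = v" by simp
  have vA: "v \<notin> A" using single(2) by blast
  have X: "itree (insert v A) (insert {v,a} EA)"
    by (rule itree.add[OF single(1) vA single(3)])
  have e1: "A \<union> {v} = insert v A" by blast
  have e2: "insert {a,b} (EA \<union> {}) = insert {v,a} EA" using bv by blast
  show ?case unfolding e1 e2 by (rule X)
next
  case (add B0 EB0 l u)
  note IH = add(4)
  have lA: "l \<notin> A" using add(6) by blast
  have dis: "A \<inter> B0 = {}" using add(6) by blast
  show ?case
  proof (cases "b = l")
    case False
    then have b: "b \<in> B0" using add(8) by simp
    have "itree (A \<union> B0) (insert {a,b} (EA \<union> EB0))"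
      by (rule IH[OF add(5) dis add(7) b])
    then have X: "itree (insert l (A \<union> B0)) (insert {l,u} (insert {a,b} (EA \<union> EB0)))"
      by (rule itree.add) (use lA add(2) add(3) in blast)+
    have e1: "A \<union> insert l B0 = insert l (A \<union> B0)" by blast
    have e2: "insert {a,b} (EA \<union> insert {l,u} EB0) = insert {l,u} (insert {a,b} (EA \<union> EB0))"
      by blast
    show ?thesis unfolding e1 e2 by (rule X)
  next
    case True
    have A': "itree (insert l A) (insert {l,a} EA)"
      by (rule itree.add[OF add(5) lA add(7)])
    have dis': "insert l A \<inter> B0 = {}" using dis add(2) by blast
    have X: "itree (insert l A \<union> B0) (insert {l,u} (insert {l,a} EA \<union> EB0))"
      by (rule IH[OF A' dis' _ add(3)]) simp
    have e1: "A \<union> insert l B0 = insert l A \<union> B0" by blast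
    have e2: "insert {a,b} (EA \<union> insert {l,u} EB0) = insert {l,u} (insert {l,a} EA \<union> EB0)"
      using True by blast
    show ?thesis unfolding e1 e2 by (rule X)
  qed
qed



lemma acyclic_mono: "acyclic_graph E \<Longrightarrow> E2 \<subseteq> E \<Longrightarrow> acyclic_graph E2"
  unfolding acyclic_graph_def
proof (intro allI impI)
  fix u v
  assume a: "\<forall>u v. {u, v} \<in> E \<longrightarrow> \<not> reachable (E - {{u, v}}) u v" "E2 \<subseteq> E" "{u,v} \<in> E2"
  show "\<not> reachable (E2 - {{u, v}}) u v"
  proof
    assume "reachable (E2 - {{u, v}}) u v"
    then have "reachable (E - {{u, v}}) u v"
      by (rule reachable_mono[rotated]) (use a(2) in blast)
    then show False using a(1) a(2) a(3) by blast
  qed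
qed

lemma reach_split:
  assumes "reachable E a x"
  shows "reachable (E - {{a,b}}) a x \<or> reachable (E - {{a,b}}) b x"
  using assms unfolding reachable_def
proof (induction rule: rtrancl_induct)
  case base then show ?case by simp
next
  case (step y z)
  have yz: "{y,z} \<in> E" using step(2) by (simp add: adj_def)
  show ?case
  proof (cases "{y,z} = {a,b}")
    case True
    then have "z = a \<or> z = b" by (metis doubleton_eq_iff)
    then show ?thesis by auto
  next
    case False
    then have "(y,z) \<in> adj (E - {{a,b}})" using yz by (simp add: adj_def)
    then show ?thesis using step(3) by (meson rtrancl.rtrancl_into_rtrancl)
  qed
qed

lemma reach_restrict:
  assumes "\<forall>f\<in>E'. f \<subseteq> V" "a \<in> V" "reachable E' a x"
  shows "reachable {f\<in>E'. f \<subseteq> {y\<in>V. reachable E' a y}} a x"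
  using assms(3) unfolding reachable_def
proof (induction rule: rtrancl_induct)
  case base then show ?case by simp
next
  case (step y z)
  have yz: "{y,z} \<in> E'" using step(2) by (simp add: adj_def)
  have yV: "y \<in> V" "z \<in> V" using yz assms(1) by auto
  have ry: "reachable E' a y" using step(1) by (simp add: reachable_def)
  have rz: "reachable E' a z" using reachable_trans[OF ry reachable_edge[OF yz]] .
  have "{y,z} \<subseteq> {y\<in>V. reachable E' a y}" using yV ry rz by blast
  then have h: "(y,z) \<in> adj {f\<in>E'. f \<subseteq> {y\<in>V. reachable E' a y}}" using yz by (simp add: adj_def)
  show ?case using step(3) h unfolding reachable_def by (rule rtrancl.rtrancl_into_rtrancl)
qed

lemma side_tree:
  assumes t: "is_tree V E" and e: "{a,b} \<in> E"
  defines "A \<equiv> {x\<in>V. reachable (E - {{a,b}}) a x}"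
  shows "is_tree A {f\<in>E - {{a,b}}. f \<subseteq> A}"
proof -
  have g: "finite V" "\<forall>e\<in>E. e \<subseteq> V \<and> card e = 2" using t unfolding is_tree_def graph_def by auto
  have ac: "acyclic_graph E" using t unfolding is_tree_def by simp
  have aV: "a \<in> V" using g(2) e by blast
  have sub: "\<forall>f\<in>E - {{a,b}}. f \<subseteq> V" using g(2) by blast
  have gr: "graph A {f\<in>E - {{a,b}}. f \<subseteq> A}"
    unfolding graph_def using g unfolding A_def by auto
  have aA: "a \<in> A" unfolding A_def using aV by simp
  have ra: "\<And>y. y \<in> A \<Longrightarrow> reachable {f\<in>E - {{a,b}}. f \<subseteq> A} a y"
    unfolding A_def using reach_restrict[OF sub aV] by blast
  have con: "connected_graph A {f\<in>E - {{a,b}}. f \<subseteq> A}"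
    unfolding connected_graph_def
  proof (intro conjI ballI)
    show "A \<noteq> {}" using aA by blast
  next
    fix y z assume "y \<in> A" "z \<in> A"
    then show "reachable {f\<in>E - {{a,b}}. f \<subseteq> A} y z"
      using reachable_trans[OF reachable_sym[OF ra] ra] by blast
  qed
  have "acyclic_graph {f\<in>E - {{a,b}}. f \<subseteq> A}"
    by (rule acyclic_mono[OF ac]) blast
  then show ?thesis unfolding is_tree_def using gr con by blast
qed

lemma tree_itree: "is_tree V E \<Longrightarrow> itree V E"
proof (induction "card V" arbitrary: V E rule: less_induct)
  case less
  have g: "finite V" "\<forall>e\<in>E. e \<subseteq> V \<and> card e = 2" using less.prems unfolding is_tree_def graph_def by auto
  have c: "V \<noteq> {}" "\<forall>u\<in>V. \<forall>v\<in>V. reachable E u v"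
    using less.prems unfolding is_tree_def connected_graph_def by auto
  have ac: "acyclic_graph E" using less.prems unfolding is_tree_def by simp
  show ?case
  proof (cases "E = {}")
    case True
    obtain v where v: "v \<in> V" using c(1) by blast
    have "\<forall>w\<in>V. w = v"
    proof
      fix w assume "w \<in> V"
      then have "reachable E v w" using c(2) v by blast
      then show "w = v" using True reachable_empty[of v w] by simp
    qed
    then have "V = {v}" using v by blast
    then show ?thesis using True itree.single by simp
  next
    case False
    then obtain e where e: "e \<in> E" by blast
    then have "card e = 2" using g(2) by blast
    then obtain a b where ab: "e = {a,b}" "a \<noteq> b" by (meson card_2_iff)
    have eab: "{a,b} \<in> E" using e ab by simp
    have aV: "a \<in> V" and bV: "b \<in> V" using g(2) eab by auto
    define E' where "E' = E - {{a,b}}"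
    define A where "A = {x\<in>V. reachable E' a x}"
    define B where "B = {x\<in>V. reachable E' b x}"
    have eba: "{b,a} \<in> E" using eab by (simp add: insert_commute)
    have E'2: "E - {{b,a}} = E'" unfolding E'_def by (simp add: insert_commute)
    have tA: "is_tree A {f\<in>E'. f \<subseteq> A}"
      using side_tree[OF less.prems eab] unfolding A_def E'_def .
    have tB: "is_tree B {f\<in>E'. f \<subseteq> B}"
      using side_tree[OF less.prems eba] unfolding B_def E'2 .
    have nr: "\<not> reachable E' a b" using ac eab unfolding acyclic_graph_def E'_def by blast
    have dis: "A \<inter> B = {}"
    proof (rule ccontr)
      assume "A \<inter> B \<noteq> {}"
      then obtain x where "reachable E' a x" "reachable E' b x" unfolding A_def B_def by blast
      then have "reachable E' a b" using reachable_trans reachable_sym by metis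
      then show False using nr by simp
    qed
    have aA: "a \<in> A" using aV unfolding A_def by simp
    have bB: "b \<in> B" using bV unfolding B_def by simp
    have VAB: "V = A \<union> B"
    proof
      show "V \<subseteq> A \<union> B"
      proof
        fix x assume "x \<in> V"
        then have "reachable E a x" using c(2) aV by blast
        then have "reachable E' a x \<or> reachable E' b x" using reach_split[of E a x b] unfolding E'_def by simp
        then show "x \<in> A \<union> B" using \<open>x \<in> V\<close> unfolding A_def B_def by blast
      qed
    next
      show "A \<union> B \<subseteq> V" unfolding A_def B_def by blast
    qed
    have EAB: "E = insert {a,b} ({f\<in>E'. f \<subseteq> A} \<union> {f\<in>E'. f \<subseteq> B})"
    proof
      show "E \<subseteq> insert {a,b} ({f\<in>E'. f \<subseteq> A} \<union> {f\<in>E'. f \<subseteq> B})"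
      proof
        fix f assume f: "f \<in> E"
        show "f \<in> insert {a,b} ({f\<in>E'. f \<subseteq> A} \<union> {f\<in>E'. f \<subseteq> B})"
        proof (cases "f = {a,b}")
          case True then show ?thesis by simp
        next
          case False
          then have fE': "f \<in> E'" using f unfolding E'_def by simp
          have "card f = 2" using g(2) f by blast
          then obtain y z where yz: "f = {y,z}" by (meson card_2_iff)
          have yzV: "y \<in> V" "z \<in> V" using g(2) f yz by auto
          have r1: "reachable E' y z" using reachable_edge[of y z E'] fE' yz by simp
          have r2: "reachable E' z y" using reachable_sym[OF r1] .
          have "y \<in> A \<or> y \<in> B" using VAB yzV by blast
          then show ?thesis
          proof
            assume "y \<in> A"
            then have "reachable E' a y" unfolding A_def by blast
            then have "z \<in> A" using reachable_trans[OF _ r1] yzV unfolding A_def by blast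
            then show ?thesis using \<open>y \<in> A\<close> fE' yz by blast
          next
            assume "y \<in> B"
            then have "reachable E' b y" unfolding B_def by blast
            then have "z \<in> B" using reachable_trans[OF _ r1] yzV unfolding B_def by blast
            then show ?thesis using \<open>y \<in> B\<close> fE' yz by blast
          qed
        qed
      qed
    next
      show "insert {a,b} ({f\<in>E'. f \<subseteq> A} \<union> {f\<in>E'. f \<subseteq> B}) \<subseteq> E"
        using eab unfolding E'_def by blast
    qed
    have cA: "card A < card V"
      by (rule psubset_card_mono[OF g(1)]) (use VAB dis bB in blast)
    have cB: "card B < card V"
      by (rule psubset_card_mono[OF g(1)]) (use VAB dis aA in blast)
    have iA: "itree A {f\<in>E'. f \<subseteq> A}" using less.hyps[OF cA tA] .
    have iB: "itree B {f\<in>E'. f \<subseteq> B}" using less.hyps[OF cB tB] .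
    have "itree (A \<union> B) (insert {a,b} ({f\<in>E'. f \<subseteq> A} \<union> {f\<in>E'. f \<subseteq> B}))"
      by (rule itree_glue[OF iB iA dis aA bB])
    then show ?thesis using VAB EAB by simp
  qed
qed



lemma reach_map_Inl:
  assumes "reachable E a b"
  shows "reachable ((\<lambda>e. Inl ` e) ` E :: ('a + nat) set set) (Inl a) (Inl b)"
  using assms unfolding reachable_def
proof (induction rule: rtrancl_induct)
  case base then show ?case by simp
next
  case (step y z)
  have "{y,z} \<in> E" using step(2) by (simp add: adj_def)
  then have "Inl ` {y,z} \<in> (\<lambda>e. Inl ` e) ` E" by blast
  then have h: "(Inl y, Inl z) \<in> adj ((\<lambda>e. Inl ` e) ` E :: ('a + nat) set set)" by (simp add: adj_def)
  show ?case using step(3) h by (rule rtrancl.rtrancl_into_rtrancl)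
qed

lemma inj_image_Inl: "inj (\<lambda>e. Inl ` e :: ('a + nat) set)"
  by (rule injI) (simp add: inj_image_eq_iff)

lemma qb_tree: "quasi_binary V E \<Longrightarrow> is_tree V E"
proof -
  assume q: "quasi_binary V E"
  then obtain V' :: "('a + nat) set" and E' where
    bt: "binary_tree V' E'" and sub: "(\<lambda>e. Inl ` e) ` E \<subseteq> E'"
    unfolding quasi_binary_def by blast
  have acE': "acyclic_graph E'" using bt unfolding binary_tree_def is_tree_def by simp
  have "acyclic_graph E"
    unfolding acyclic_graph_def
  proof (intro allI impI notI)
    fix u v assume uv: "{u,v} \<in> E" and r: "reachable (E - {{u,v}}) u v"
    have r2: "reachable ((\<lambda>e. Inl ` e) ` (E - {{u,v}}) :: ('a + nat) set set) (Inl u) (Inl v)"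
      by (rule reach_map_Inl[OF r])
    have s2: "(\<lambda>e. Inl ` e) ` (E - {{u,v}}) \<subseteq> E' - {{Inl u, Inl v}}"
    proof
      fix f assume "f \<in> (\<lambda>e. Inl ` e :: ('a + nat) set) ` (E - {{u,v}})"
      then obtain g where g: "g \<in> E" "g \<noteq> {u,v}" "f = Inl ` g" by blast
      have "f \<in> E'" using g sub by blast
      moreover have "f \<noteq> Inl ` {u,v}" using g(2,3) inj_image_Inl unfolding inj_def by blast
      ultimately show "f \<in> E' - {{Inl u, Inl v}}" by simp
    qed
    have "reachable (E' - {{Inl u, Inl v}}) (Inl u) (Inl v)" by (rule reachable_mono[OF s2 r2])
    moreover have "Inl ` {u,v} \<in> E'" using uv sub by blast
    then have "{Inl u, Inl v} \<in> E'" by simp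
    ultimately show False using acE' unfolding acyclic_graph_def by simp
  qed
  then show ?thesis using q unfolding quasi_binary_def is_tree_def by blast
qed

lemma qb_deg: "quasi_binary V E \<Longrightarrow> v \<in> V \<Longrightarrow> degree E v \<le> 3"
proof -
  assume q: "quasi_binary V E" and v: "v \<in> V"
  then obtain V' :: "('a + nat) set" and E' where
    bt: "binary_tree V' E'" and subV: "Inl ` V \<subseteq> V'" and sub: "(\<lambda>e. Inl ` e) ` E \<subseteq> E'"
    unfolding quasi_binary_def by blast
  have gr: "finite V'" "\<forall>e\<in>E'. e \<subseteq> V'"
    using bt unfolding binary_tree_def is_tree_def graph_def by auto
  have fE': "finite E'"
    by (rule finite_subset[of _ "Pow V'"]) (use gr in auto)
  have d3: "degree E' (Inl v) \<in> {1,2,3}" using bt subV v unfolding binary_tree_def by blast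
  have "card {e\<in>E. v\<in>e} \<le> card {e\<in>E'. Inl v \<in> e}"
  proof (rule card_inj_on_le[where f="\<lambda>e. Inl ` e"])
    show "inj_on (\<lambda>e. Inl ` e :: ('a + nat) set) {e \<in> E. v \<in> e}"
      using inj_image_Inl by (rule inj_on_subset) simp
    show "(\<lambda>e. Inl ` e) ` {e \<in> E. v \<in> e} \<subseteq> {e \<in> E'. Inl v \<in> e}" using sub by blast
    show "finite {e \<in> E'. Inl v \<in> e}" using fE' by simp
  qed
  then show ?thesis using d3 unfolding degree_def by auto
qed



lemma comp_isolated:
  assumes "l \<notin> V0" "\<forall>e\<in>E1. l \<notin> e" "C \<in> components (insert l V0) E1"
  shows "C = {l} \<or> C \<in> components V0 E1"
proof -
  obtain v where v: "v \<in> insert l V0" "C = {x\<in>insert l V0. reachable E1 v x}"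
    using assms(3) unfolding components_def by blast
  show ?thesis
  proof (cases "v = l")
    case True
    have "\<And>x. reachable E1 l x \<Longrightarrow> x = l" using reachable_isolated[OF assms(2)] by blast
    then have "C = {l}" using v True by auto
    then show ?thesis by simp
  next
    case False
    then have vV: "v \<in> V0" using v(1) by simp
    have "\<not> reachable E1 v l"
    proof
      assume "reachable E1 v l"
      then have "reachable E1 l v" by (rule reachable_sym)
      then have "v = l" using reachable_isolated[OF assms(2)] by blast
      then show False using False by simp
    qed
    then have "C = {x\<in>V0. reachable E1 v x}" using v(2) by auto
    then show ?thesis using vV unfolding components_def by blast
  qed
qed

lemma reach_pendant:
  assumes "\<forall>e\<in>E1. l \<notin> e" "reachable (insert {l,u} E1) x y"
  shows "reachable E1 (if x = l then u else x) (if y = l then u else y)"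
  using assms(2) unfolding reachable_def
proof (induction rule: rtrancl_induct)
  case base then show ?case by simp
next
  case (step y z)
  have yz: "{y,z} = {l,u} \<or> {y,z} \<in> E1" using step(2) by (simp add: adj_def)
  then show ?case
  proof
    assume "{y,z} = {l,u}"
    then have "(y = l \<and> z = u) \<or> (y = u \<and> z = l)" by (metis doubleton_eq_iff)
    then have "(if y = l then u else y) = (if z = l then u else z)" by auto
    then show ?case using step(3) by simp
  next
    assume e: "{y,z} \<in> E1"
    then have "y \<noteq> l" "z \<noteq> l" using assms(1) by auto
    then have "((if y = l then u else y), (if z = l then u else z)) \<in> adj E1" using e by (simp add: adj_def)
    then show ?case using step(3) by (rule rtrancl.rtrancl_into_rtrancl[rotated])
  qed
qed

lemma comp_pendant:
  assumes lV: "l \<notin> V0" and uV: "u \<in> V0" and nl: "\<forall>e\<in>E1. l \<notin> e"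
    and C: "C \<in> components (insert l V0) (insert {l,u} E1)"
  shows "\<exists>C0\<in>components V0 E1. (C = C0 \<and> u \<notin> C0) \<or> (C = insert l C0 \<and> u \<in> C0)"
proof -
  define E2 where "E2 = insert {l,u} E1"
  obtain v where v: "v \<in> insert l V0" "C = {x\<in>insert l V0. reachable E2 v x}"
    using C unfolding components_def E2_def by blast
  define v' where "v' = (if v = l then u else v)"
  have v'V: "v' \<in> V0" using v(1) uV unfolding v'_def by auto
  have sub: "E1 \<subseteq> E2" unfolding E2_def by blast
  have lu: "reachable E2 l u" unfolding E2_def by (rule reachable_edge) simp
  have vv': "reachable E2 v v'"
  proof (cases "v = l")
    case True then show ?thesis using lu unfolding v'_def by simp
  next
    case False then show ?thesis unfolding v'_def by simp
  qed
  have inV: "\<And>x. x \<in> V0 \<Longrightarrow> reachable E2 v x \<longleftrightarrow> reachable E1 v' x"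
  proof
    fix x assume x: "x \<in> V0" "reachable E2 v x"
    have "x \<noteq> l" using x(1) lV by blast
    then show "reachable E1 v' x" using reach_pendant[OF nl x(2)[unfolded E2_def]] unfolding v'_def by simp
  next
    fix x assume x: "x \<in> V0" "reachable E1 v' x"
    show "reachable E2 v x" using reachable_trans[OF vv' reachable_mono[OF sub x(2)]] .
  qed
  have atl: "reachable E2 v l \<longleftrightarrow> reachable E1 v' u"
  proof
    assume h: "reachable E2 v l"
    have "reachable E1 (if v = l then u else v) (if l = l then u else l)"
      using reach_pendant[OF nl h[unfolded E2_def]] .
    then show "reachable E1 v' u" unfolding v'_def by simp
  next
    assume "reachable E1 v' u"
    then have "reachable E2 v u" using reachable_trans[OF vv' reachable_mono[OF sub]] by blast
    then show "reachable E2 v l" using reachable_trans[OF _ reachable_sym[OF lu]] by blast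
  qed
  define C0 where "C0 = {x\<in>V0. reachable E1 v' x}"
  have C0c: "C0 \<in> components V0 E1" unfolding C0_def components_def using v'V by blast
  show ?thesis
  proof (cases "u \<in> C0")
    case True
    have "C = insert l C0"
    proof
      show "C \<subseteq> insert l C0" using v(2) inV unfolding C0_def by blast
      show "insert l C0 \<subseteq> C" using v(2) inV atl True unfolding C0_def by blast
    qed
    then show ?thesis using C0c True by blast
  next
    case False
    have "C = C0"
    proof
      show "C \<subseteq> C0" using v(2) inV atl False uV unfolding C0_def by blast
      show "C0 \<subseteq> C" using v(2) inV unfolding C0_def by blast
    qed
    then show ?thesis using C0c False by blast
  qed
qed



definition bnds :: "'a set \<Rightarrow> 'a set set \<Rightarrow> ('a \<Rightarrow> real) \<Rightarrow> real \<Rightarrow> real \<Rightarrow> bool" where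
  "bnds V E \<omega> L \<gamma> \<longleftrightarrow> (\<forall>v\<in>V. \<omega> v \<le> 2*L+\<gamma>) \<and> (\<forall>v\<in>V. 2 \<le> degree E v \<longrightarrow> \<omega> v \<le> L+\<gamma>)
     \<and> (\<forall>v\<in>V. 3 \<le> degree E v \<longrightarrow> \<omega> v \<le> \<gamma>)"

lemma components_sub: "C \<in> components V E \<Longrightarrow> C \<subseteq> V"
  unfolding components_def by blast

lemma wt_update: "finite A \<Longrightarrow> u \<in> A \<Longrightarrow> wt (\<omega>(u := c)) A = wt \<omega> A - \<omega> u + c"
proof -
  assume a: "finite A" "u \<in> A"
  have "wt (\<omega>(u := c)) A = c + sum (\<omega>(u := c)) (A - {u})"
    unfolding wt_def using sum.remove[OF a, of "\<omega>(u := c)"] by simp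
  moreover have "sum (\<omega>(u := c)) (A - {u}) = sum \<omega> (A - {u})"
    by (rule sum.cong) auto
  moreover have "wt \<omega> A = \<omega> u + sum \<omega> (A - {u})"
    unfolding wt_def using sum.remove[OF a, of \<omega>] by simp
  ultimately show ?thesis by simp
qed

lemma wt_insert: "finite A \<Longrightarrow> l \<notin> A \<Longrightarrow> wt \<omega> (insert l A) = \<omega> l + wt \<omega> A"
  unfolding wt_def by simp

lemma case_k1:
  assumes "itree V E" "L \<le> wt \<omega> V"
  shows "\<exists>F\<subseteq>E. card F = 1 - 1 \<and> (\<forall>C\<in>components V (E - F). L \<le> wt \<omega> C)"
proof (intro exI conjI)
  show "{} \<subseteq> E" by simp
  show "card {} = 1 - 1" by simp
  show "\<forall>C\<in>components V (E - {}). L \<le> wt \<omega> C"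
    using itree_components[OF assms(1)] assms(2) by auto
qed

lemma case_kn:
  assumes t: "itree V E" and cV: "card V = k" and k2: "2 \<le> k"
    and W: "(2*real k - 1)*L + (real k - 1)*\<gamma> \<le> wt \<omega> V"
    and b: "\<forall>v\<in>V. \<omega> v \<le> 2*L+\<gamma>"
  shows "\<exists>F\<subseteq>E. card F = k - 1 \<and> (\<forall>C\<in>components V (E - F). L \<le> wt \<omega> C)"
proof (intro exI conjI)
  show "E \<subseteq> E" by simp
  show "card E = k - 1" using itree_card[OF t] cV by simp
  have fV: "finite V" using itree_graph[OF t] by simp
  show "\<forall>C\<in>components V (E - E). L \<le> wt \<omega> C"
  proof
    fix C assume "C \<in> components V (E - E)"
    then obtain v where v: "v \<in> V" "C = {x\<in>V. reachable {} v x}" unfolding components_def by auto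
    have "C = {v}" using v reachable_empty by auto
    then have wC: "wt \<omega> C = \<omega> v" unfolding wt_def by simp
    have s1: "wt \<omega> V = \<omega> v + sum \<omega> (V - {v})"
      unfolding wt_def using sum.remove[OF fV v(1)] .
    have s2: "sum \<omega> (V - {v}) \<le> real (card (V - {v})) * (2*L+\<gamma>)"
      by (rule sum_bounded_above) (use b in auto)
    have c: "real (card (V - {v})) = real k - 1" using cV fV v(1) k2 by (simp add: of_nat_diff)
    have id: "(2*real k - 1)*L + (real k - 1)*\<gamma> = (real k - 1)*(2*L+\<gamma>) + L"
      by (simp add: algebra_simps)
    show "L \<le> wt \<omega> C" using W s1 s2 c id wC by simp
  qed
qed



lemma main:
  "itree V E \<Longrightarrow> \<forall>v\<in>V. degree E v \<le> 3 \<Longrightarrow> 1 \<le> k \<Longrightarrow> k \<le> card V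
   \<Longrightarrow> (2*real k - 1)*L + (real k - 1)*\<gamma> \<le> wt \<omega> V \<Longrightarrow> (2 \<le> k \<longrightarrow> bnds V E \<omega> L \<gamma>)
   \<Longrightarrow> \<exists>F\<subseteq>E. card F = k - 1 \<and> (\<forall>C\<in>components V (E - F). L \<le> wt \<omega> C)"
proof (induction arbitrary: k \<omega> rule: itree.induct)
  case (single v)
  then have "k = 1" by simp
  then show ?case using case_k1[OF itree.single] single(4) by simp
next
  case (add V0 E0 l u)
  note IH = add(4)
  have t: "itree (insert l V0) (insert {l,u} E0)" using itree.add[OF add(1-3)] .
  have fV0: "finite V0" and fE0: "finite E0" and sub0: "\<forall>e\<in>E0. e \<subseteq> V0"
    using itree_graph[OF add(1)] by auto
  have nl: "\<forall>e\<in>E0. l \<notin> e" using sub0 add(2) by blast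
  have luE0: "{l,u} \<notin> E0" using nl by blast
  have lu: "l \<noteq> u" using add(2,3) by blast
  have cV: "card (insert l V0) = card V0 + 1" using fV0 add(2) by simp
  have fE: "finite (insert {l,u} E0)" using fE0 by simp
  have degO: "\<And>v. v \<in> V0 \<Longrightarrow> v \<noteq> u \<Longrightarrow> degree (insert {l,u} E0) v = degree E0 v"
    using add(2) by (intro degree_insert_other) auto
  have degU: "degree (insert {l,u} E0) u = degree E0 u + 1"
    by (rule degree_insert_in[OF fE0 luE0]) simp
  have degM: "\<And>v. degree E0 v \<le> degree (insert {l,u} E0) v"
    by (rule degree_mono[OF fE]) blast
  have d3: "\<forall>v\<in>V0. degree E0 v \<le> 3" using add(5) degM order_trans by fastforce
  have W: "wt \<omega> (insert l V0) = \<omega> l + wt \<omega> V0" by (rule wt_insert[OF fV0 add(2)])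
  show ?case
  proof (cases "k = 1")
    case True
    then show ?thesis using case_k1[OF t] add(8) by simp
  next
    case False
    then have k2: "2 \<le> k" using add(6) by simp
    have b: "bnds (insert l V0) (insert {l,u} E0) \<omega> L \<gamma>" using add(9) k2 by simp
    show ?thesis
    proof (cases "k = card (insert l V0)")
      case True
      show ?thesis
        by (rule case_kn[OF t True[symmetric] k2 add(8)]) (use b in \<open>simp add: bnds_def\<close>)
    next
      case False
      then have kV0: "k \<le> card V0" using add(7) cV by simp
      have c2: "2 \<le> card V0" using kV0 k2 by simp
      have ml: "\<omega> l \<le> 2*L+\<gamma>" using b unfolding bnds_def by simp
      show ?thesis
      proof (cases "L \<le> \<omega> l")
        case True
        \<comment> \<open>cut off the leaf l\<close>
        have k1: "1 \<le> k - 1" using k2 by simp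
        have kk: "k - 1 \<le> card V0" using kV0 by simp
        have rk: "real (k - 1) = real k - 1" using k2 by (simp add: of_nat_diff)
        have W0: "(2*real (k-1) - 1)*L + (real (k-1) - 1)*\<gamma> \<le> wt \<omega> V0"
          using add(8) W ml rk by (simp add: algebra_simps)
        have b0: "2 \<le> k - 1 \<longrightarrow> bnds V0 E0 \<omega> L \<gamma>"
        proof -
          have "\<forall>v\<in>V0. 2 \<le> degree E0 v \<longrightarrow> \<omega> v \<le> L+\<gamma>"
            using b degM unfolding bnds_def by (meson insertCI order_trans)
          moreover have "\<forall>v\<in>V0. 3 \<le> degree E0 v \<longrightarrow> \<omega> v \<le> \<gamma>"
            using b degM unfolding bnds_def by (meson insertCI order_trans)
          moreover have "\<forall>v\<in>V0. \<omega> v \<le> 2*L+\<gamma>" using b unfolding bnds_def by simp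
          ultimately show ?thesis unfolding bnds_def by simp
        qed
        obtain F0 where F0: "F0 \<subseteq> E0" "card F0 = k - 1 - 1"
          "\<forall>C\<in>components V0 (E0 - F0). L \<le> wt \<omega> C"
          using IH[OF d3 k1 kk W0 b0] by blast
        have fF0: "finite F0" using F0(1) fE0 finite_subset by blast
        have luF0: "{l,u} \<notin> F0" using F0(1) luE0 by blast
        show ?thesis
        proof (intro exI conjI)
          show "insert {l,u} F0 \<subseteq> insert {l,u} E0" using F0(1) by blast
          show "card (insert {l,u} F0) = k - 1" using fF0 luF0 F0(2) k2 by simp
          have eq: "insert {l,u} E0 - insert {l,u} F0 = E0 - F0" using luE0 by blast
          show "\<forall>C\<in>components (insert l V0) (insert {l,u} E0 - insert {l,u} F0). L \<le> wt \<omega> C"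
          proof
            fix C assume "C \<in> components (insert l V0) (insert {l,u} E0 - insert {l,u} F0)"
            then have "C \<in> components (insert l V0) (E0 - F0)" unfolding eq .
            then have "C = {l} \<or> C \<in> components V0 (E0 - F0)"
              by (rule comp_isolated[OF add(2), rotated]) (use nl in blast)
            then show "L \<le> wt \<omega> C"
            proof
              assume "C = {l}" then show ?thesis using True by (simp add: wt_def)
            next
              assume "C \<in> components V0 (E0 - F0)" then show ?thesis using F0(3) by blast
            qed
          qed
        qed
      next
        case False
        \<comment> \<open>merge the leaf l into u\<close>
        then have ll: "\<omega> l < L" by simp
        define \<omega>' where "\<omega>' = \<omega>(u := \<omega> u + \<omega> l)"
        have W': "wt \<omega>' V0 = wt \<omega> (insert l V0)"
          unfolding \<omega>'_def using wt_update[OF fV0 add(3)] W by simp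
        have du: "1 \<le> degree E0 u" by (rule itree_deg_pos[OF add(1) c2 add(3)])
        have uV: "u \<in> insert l V0" using add(3) by simp
        have "2 \<le> degree (insert {l,u} E0) u" using degU du by simp
        then have bu2: "\<omega> u \<le> L+\<gamma>" using b uV unfolding bnds_def by blast
        have b0: "2 \<le> k \<longrightarrow> bnds V0 E0 \<omega>' L \<gamma>"
          unfolding bnds_def
        proof (intro impI conjI ballI)
          fix v assume v: "v \<in> V0"
          show "\<omega>' v \<le> 2*L+\<gamma>"
          proof (cases "v = u")
            case True then show ?thesis unfolding \<omega>'_def using bu2 ll by simp
          next
            case False then show ?thesis unfolding \<omega>'_def using b v unfolding bnds_def by simp
          qed
        next
          fix v assume v: "v \<in> V0" and d: "2 \<le> degree E0 v"
          show "\<omega>' v \<le> L+\<gamma>"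
          proof (cases "v = u")
            case True
            then have "3 \<le> degree (insert {l,u} E0) u" using d degU by simp
            then have "\<omega> u \<le> \<gamma>" using b uV unfolding bnds_def by blast
            then show ?thesis unfolding \<omega>'_def using True ll by simp
          next
            case False
            then show ?thesis unfolding \<omega>'_def using b v d degO unfolding bnds_def by simp
          qed
        next
          fix v assume v: "v \<in> V0" and d: "3 \<le> degree E0 v"
          show "\<omega>' v \<le> \<gamma>"
          proof (cases "v = u")
            case True
            then have "4 \<le> degree (insert {l,u} E0) u" using d degU by simp
            then show ?thesis using add(5) uV by fastforce
          next
            case False
            then show ?thesis unfolding \<omega>'_def using b v d degO unfolding bnds_def by simp
          qed
        qed
        have W0: "(2*real k - 1)*L + (real k - 1)*\<gamma> \<le> wt \<omega>' V0" using add(8) W' by simp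
        obtain F0 where F0: "F0 \<subseteq> E0" "card F0 = k - 1"
          "\<forall>C\<in>components V0 (E0 - F0). L \<le> wt \<omega>' C"
          using IH[OF d3 add(6) kV0 W0 b0] by blast
        have luF0: "{l,u} \<notin> F0" using F0(1) luE0 by blast
        show ?thesis
        proof (intro exI conjI)
          show "F0 \<subseteq> insert {l,u} E0" using F0(1) by blast
          show "card F0 = k - 1" by (rule F0(2))
          have eq: "insert {l,u} E0 - F0 = insert {l,u} (E0 - F0)" using luF0 by blast
          have nl': "\<forall>e\<in>E0 - F0. l \<notin> e" using nl by blast
          show "\<forall>C\<in>components (insert l V0) (insert {l,u} E0 - F0). L \<le> wt \<omega> C"
          proof
            fix C assume "C \<in> components (insert l V0) (insert {l,u} E0 - F0)"
            then have "C \<in> components (insert l V0) (insert {l,u} (E0 - F0))" unfolding eq .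
            then obtain C0 where C0: "C0 \<in> components V0 (E0 - F0)"
              "(C = C0 \<and> u \<notin> C0) \<or> (C = insert l C0 \<and> u \<in> C0)"
              using comp_pendant[OF add(2) add(3) nl'] by blast
            have C0s: "C0 \<subseteq> V0" using components_sub[OF C0(1)] .
            have fC0: "finite C0" using C0s fV0 finite_subset by blast
            have lC0: "l \<notin> C0" using C0s add(2) by blast
            have L0: "L \<le> wt \<omega>' C0" using F0(3) C0(1) by blast
            show "L \<le> wt \<omega> C"
            proof (cases "u \<in> C0")
              case True
              then have "C = insert l C0" using C0(2) by blast
              then have "wt \<omega> C = \<omega> l + wt \<omega> C0" using wt_insert[OF fC0 lC0] by simp
              moreover have "wt \<omega>' C0 = wt \<omega> C0 + \<omega> l"
                unfolding \<omega>'_def using wt_update[OF fC0 True] by simp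
              ultimately show ?thesis using L0 by simp
            next
              case False
              then have "C = C0" using C0(2) by blast
              moreover have "wt \<omega>' C0 = wt \<omega> C0"
                unfolding \<omega>'_def wt_def by (rule sum.cong) (use False in auto)
              ultimately show ?thesis using L0 by simp
            qed
          qed
        qed
      qed
    qed
  qed
qed



lemma components_finite: "finite V \<Longrightarrow> finite (components V E)"
proof -
  assume "finite V"
  moreover have "components V E = (\<lambda>v. {u\<in>V. reachable E v u}) ` V" unfolding components_def by blast
  ultimately show ?thesis by simp
qed

lemma components_ne: "V \<noteq> {} \<Longrightarrow> components V E \<noteq> {}"
  unfolding components_def by blast

lemma omega_deg_ge:
  assumes "finite V" "v \<in> V" "i \<le> degree E v"
  shows "\<omega> v \<le> omega_deg V E \<omega> i"
proof -
  have "{\<omega> v | v. v \<in> V \<and> i \<le> degree E v} = \<omega> ` {v\<in>V. i \<le> degree E v}" by blast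
  then have f: "finite {\<omega> v | v. v \<in> V \<and> i \<le> degree E v}" using assms(1) by simp
  show ?thesis unfolding omega_deg_def by (rule Max_ge[OF f]) (use assms in blast)
qed

theorem theorem2:
  fixes V :: "'a set" and E :: "'a set set" and \<omega> :: "'a \<Rightarrow> real"
    and k :: nat and \<gamma> :: real
  assumes "quasi_binary V E"
    and "2 \<le> k" and "k \<le> card V - 1"
    and "\<forall>v\<in>V. 3 \<le> degree E v \<longrightarrow> \<omega> v \<le> \<gamma>"
    and "wt \<omega> V \<ge> max ((2 * real k - 1) / 2 * omega_deg V E \<omega> 1 - \<gamma> / 2)
                          ((2 * real k - 1) * omega_deg V E \<omega> 2 - real k * \<gamma>)"
  shows "beta V E \<omega> k \<ge> (wt \<omega> V - (real k - 1) * \<gamma>) / (2 * real k - 1)"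
proof -
  define W where "W = wt \<omega> V"
  define D where "D = 2 * real k - 1"
  define L where "L = (W - (real k - 1) * \<gamma>) / D"
  have Dpos: "D > 0" unfolding D_def using assms(2) by simp
  have LD: "L * D = W - (real k - 1) * \<gamma>" unfolding L_def using Dpos by simp
  have t: "is_tree V E" by (rule qb_tree[OF assms(1)])
  have it: "itree V E" by (rule tree_itree[OF t])
  have d3: "\<forall>v\<in>V. degree E v \<le> 3" using qb_deg[OF assms(1)] by blast
  have fV: "finite V" and fE: "finite E" using itree_graph[OF it] by auto
  have cV: "3 \<le> card V" using assms(2,3) by simp
  have deg1: "\<And>v. v \<in> V \<Longrightarrow> 1 \<le> degree E v"
    using itree_deg_pos[OF it] cV by simp
  define w1 where "w1 = omega_deg V E \<omega> 1"
  define w2 where "w2 = omega_deg V E \<omega> 2"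
  have h1: "D * w1 \<le> 2 * W + \<gamma>" using assms(5) unfolding W_def D_def w1_def by simp
  have h2: "D * w2 \<le> W + real k * \<gamma>" using assms(5) unfolding W_def D_def w2_def by simp
  have e1: "(2*L+\<gamma>) * D = 2 * W + \<gamma>" using LD unfolding D_def by (simp add: algebra_simps)
  have e2: "(L+\<gamma>) * D = W + real k * \<gamma>" using LD unfolding D_def by (simp add: algebra_simps)
  have w1b: "w1 \<le> 2*L+\<gamma>"
  proof -
    have "w1 * D \<le> (2*L+\<gamma>) * D" using h1 e1 by (simp add: mult.commute)
    then show ?thesis using Dpos by simp
  qed
  have w2b: "w2 \<le> L+\<gamma>"
  proof -
    have "w2 * D \<le> (L+\<gamma>) * D" using h2 e2 by (simp add: mult.commute)
    then show ?thesis using Dpos by simp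
  qed
  have b: "bnds V E \<omega> L \<gamma>"
    unfolding bnds_def
  proof (intro conjI ballI impI)
    fix v assume v: "v \<in> V"
    have "\<omega> v \<le> w1" unfolding w1_def by (rule omega_deg_ge[OF fV v deg1[OF v]])
    then show "\<omega> v \<le> 2*L+\<gamma>" using w1b by simp
  next
    fix v assume v: "v \<in> V" and d: "2 \<le> degree E v"
    have "\<omega> v \<le> w2" unfolding w2_def by (rule omega_deg_ge[OF fV v d])
    then show "\<omega> v \<le> L+\<gamma>" using w2b by simp
  next
    fix v assume v: "v \<in> V" and d: "3 \<le> degree E v"
    then show "\<omega> v \<le> \<gamma>" using assms(4) by blast
  qed
  have Wk: "(2*real k - 1)*L + (real k - 1)*\<gamma> \<le> wt \<omega> V"
    using LD unfolding D_def W_def by (simp add: algebra_simps)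
  obtain F where F: "F \<subseteq> E" "card F = k - 1" "\<forall>C\<in>components V (E - F). L \<le> wt \<omega> C"
  proof -
    have k1: "1 \<le> k" using assms(2) by simp
    have kV: "k \<le> card V" using assms(3) by simp
    show ?thesis using main[OF it d3 k1 kV Wk] b that by blast
  qed
  define S where "S = {Min (wt \<omega> ` components V (E - F)) | F. F \<subseteq> E \<and> card F = k - 1}"
  have fS: "finite S"
  proof -
    have "S \<subseteq> (\<lambda>F. Min (wt \<omega> ` components V (E - F))) ` Pow E" unfolding S_def by blast
    then show ?thesis using fE finite_subset by blast
  qed
  have inS: "Min (wt \<omega> ` components V (E - F)) \<in> S" unfolding S_def using F(1,2) by blast
  have Vne: "V \<noteq> {}" using cV by auto
  have "L \<le> Min (wt \<omega> ` components V (E - F))"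
    using F(3) components_finite[OF fV] components_ne[OF Vne] by (simp add: Min_ge_iff)
  also have "\<dots> \<le> Max S" by (rule Max_ge[OF fS inS])
  finally have "L \<le> beta V E \<omega> k" unfolding beta_def S_def .
  then show ?thesis unfolding L_def W_def D_def .
qed

end
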